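(* Let $G$ be an edge-transitive graph with an odd number of edges. Then there are no two distinct edges $\{a,b\}\neq\{c,d\}$ of $G$ such that there is perfect state transfer between $e_a-e_b$ and $e_c-e_d$.
   Context: With $L=\Delta-A$ the Laplacian of $G$ and $U(t)=\exp(itL)$, there is perfect state transfer between $e_a-e_b$ and $e_c-e_d$ if $U(t)(e_a-e_b)=\gamma(e_c-e_d)$ for some $t\ge0$ and $\gamma\in\mathbb{C}$, $|\gamma|=1$; $e_v$ is the standard basis vector of $v$. *)

theory Defs
  imports "HOL-Analysis.Analysis"
begin

definition simple_graph :: "('v \<Rightarrow> 'v \<Rightarrow> bool) \<Rightarrow> bool" where
  "simple_graph E \<longleftrightarrow> (\<forall>x y. E x y \<longrightarrow> E y x) \<and> (\<forall>x. \<not> E x x)"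

definition edges :: "('v \<Rightarrow> 'v \<Rightarrow> bool) \<Rightarrow> 'v set set" where
  "edges E = {{a, b} | a b. E a b}"

definition graph_automorphism :: "('v \<Rightarrow> 'v \<Rightarrow> bool) \<Rightarrow> ('v \<Rightarrow> 'v) \<Rightarrow> bool" where
  "graph_automorphism E \<sigma> \<longleftrightarrow> bij \<sigma> \<and> (\<forall>x y. E (\<sigma> x) (\<sigma> y) \<longleftrightarrow> E x y)"

definition edge_transitive :: "('v \<Rightarrow> 'v \<Rightarrow> bool) \<Rightarrow> bool" where
  "edge_transitive E \<longleftrightarrow>
     (\<forall>e\<in>edges E. \<forall>f\<in>edges E. \<exists>\<sigma>. graph_automorphism E \<sigma> \<and> \<sigma> ` e = f)"

definition degree :: "('v \<Rightarrow> 'v \<Rightarrow> bool) \<Rightarrow> 'v \<Rightarrow> nat" where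
  "degree E x = card {y. E x y}"

definition laplacian :: "('v::finite \<Rightarrow> 'v \<Rightarrow> bool) \<Rightarrow> complex^'v^'v" where
  "laplacian E = (\<chi> i j. (if i = j then of_nat (degree E i) else 0) - (if E i j then 1 else 0))"

text \<open>Action of U(t) = exp(i t L) on a vector, via the exponential power series.\<close>
definition transition :: "('v::finite \<Rightarrow> 'v \<Rightarrow> bool) \<Rightarrow> real \<Rightarrow> complex^'v \<Rightarrow> complex^'v" where
  "transition E t x = (\<Sum>k. ((\<i> * of_real t) ^ k / of_nat (fact k)) *s ((((*v) (laplacian E)) ^^ k) x))"

definition std_basis :: "'v::finite \<Rightarrow> complex^'v" where
  "std_basis v = (\<chi> i. if i = v then 1 else 0)"

definition pst :: "('v::finite \<Rightarrow> 'v \<Rightarrow> bool) \<Rightarrow> complex^'v \<Rightarrow> complex^'v \<Rightarrow> bool" where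
  "pst E x y \<longleftrightarrow> (\<exists>t\<ge>0. \<exists>\<gamma>. cmod \<gamma> = 1 \<and> transition E t x = \<gamma> *s y)"

end

theory Submission
  imports Defs
begin

definition cf :: "real \<Rightarrow> nat \<Rightarrow> complex" where
  "cf t k = (\<i> * of_real t) ^ k / of_nat (fact k)"

lemma cf_alt: "cf t k = (\<i> * of_real t) ^ k /\<^sub>R fact k"
  by (simp add: cf_def scaleR_conv_of_real divide_inverse mult.commute)

lemma cf_add: "cf (s + t) n = (\<Sum>j\<le>n. cf s j * cf t (n - j))"
  unfolding cf_alt using exp_series_add_commuting[of "\<i> * of_real s" "\<i> * of_real t" n]
  by (simp add: distrib_left mult.commute)

lemma norm_cf: "norm (cf t k) = \<bar>t\<bar> ^ k / fact k"
  by (simp add: cf_def norm_mult norm_power norm_divide)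

lemma cnj_cf: "cnj (cf t k) = cf (- t) k"
  by (simp add: cf_def)

fun mp :: "complex^'v::finite^'v \<Rightarrow> nat \<Rightarrow> complex^'v^'v" where
  "mp L 0 = mat 1" | "mp L (Suc k) = L ** mp L k"

lemma funpow_mp: "(((*v) L) ^^ k) x = mp L k *v x"
  by (induction k) (simp_all add: matrix_vector_mul_assoc)

lemma mp_add: "mp L (j + k) = mp L j ** mp L k"
  by (induction j) (simp_all add: matrix_mul_assoc)

definition bnd :: "complex^'v::finite^'v \<Rightarrow> real" where
  "bnd L = (\<Sum>i\<in>UNIV. \<Sum>j\<in>UNIV. norm (L$i$j))"

lemma mp_bound: "norm (mp L k $ i $ l) \<le> bnd L ^ k"
proof (induction k arbitrary: i l)
  case 0
  then show ?case by (simp add: mat_def)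
next
  case (Suc k)
  have "norm (mp L (Suc k) $ i $ l) = norm (\<Sum>m\<in>UNIV. L$i$m * mp L k $ m $ l)"
    by (simp add: matrix_matrix_mult_def)
  also have "\<dots> \<le> (\<Sum>m\<in>UNIV. norm (L$i$m) * norm (mp L k $ m $ l))"
    by (rule order_trans[OF norm_sum]) (simp add: norm_mult)
  also have "\<dots> \<le> (\<Sum>m\<in>UNIV. norm (L$i$m) * bnd L ^ k)"
    by (rule sum_mono) (simp add: Suc.IH mult_left_mono)
  also have "\<dots> = (\<Sum>m\<in>UNIV. norm (L$i$m)) * bnd L ^ k"
    by (simp add: sum_distrib_right)
  also have "\<dots> \<le> bnd L * bnd L ^ k"
  proof (rule mult_right_mono)
    show "(\<Sum>m\<in>UNIV. norm (L$i$m)) \<le> bnd L" unfolding bnd_def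
      by (rule member_le_sum[where f="\<lambda>i. \<Sum>m\<in>UNIV. norm (L$i$m)"]) (auto intro: sum_nonneg)
    show "0 \<le> bnd L ^ k" by (simp add: bnd_def sum_nonneg)
  qed
  finally show ?case by simp
qed

lemma mpv_bound: "norm ((mp L k *v x) $ i) \<le> (\<Sum>m\<in>UNIV. norm (x$m)) * bnd L ^ k"
proof -
  have "norm ((mp L k *v x) $ i) = norm (\<Sum>m\<in>UNIV. mp L k $ i $ m * x $ m)"
    by (simp add: matrix_vector_mult_def)
  also have "\<dots> \<le> (\<Sum>m\<in>UNIV. bnd L ^ k * norm (x $ m))"
    by (rule order_trans[OF norm_sum], rule sum_mono)
       (simp add: norm_mult mp_bound mult_right_mono)
  finally show ?thesis by (simp add: sum_distrib_left mult.commute)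
qed

lemma summable_cf:
  assumes "\<And>k. norm (f k) \<le> C * B ^ k"
  shows "summable (\<lambda>k. norm (cf t k * f k))"
proof (rule summable_comparison_test'[where N=0])
  show "summable (\<lambda>k. C * ((\<bar>t\<bar> * B) ^ k /\<^sub>R fact k))"
    by (rule summable_mult, rule summable_exp_generic)
  fix k :: nat
  have "norm (norm (cf t k * f k)) = \<bar>t\<bar> ^ k / fact k * norm (f k)"
    by (simp add: norm_mult norm_cf)
  also have "\<dots> \<le> \<bar>t\<bar> ^ k / fact k * (C * B ^ k)"
    by (rule mult_left_mono[OF assms]) simp
  also have "\<dots> = C * ((\<bar>t\<bar> * B) ^ k /\<^sub>R fact k)"
    by (simp add: power_mult_distrib divide_inverse)
  finally show "norm (norm (cf t k * f k)) \<le> C * ((\<bar>t\<bar> * B) ^ k /\<^sub>R fact k)" .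
qed

lemma vec_sums:
  assumes "\<And>i. (\<lambda>k. f k $ i) sums (s $ i)"
  shows "f sums s"
  using assms unfolding sums_def
  by (intro vec_tendstoI) (simp add: sum_component)

lemma trans_sums:
  "(\<lambda>k. cf t k * (mp (laplacian E) k *v x) $ i) sums (transition E t x $ i)"
proof -
  let ?L = "laplacian E"
  define s where "s = (\<chi> i. \<Sum>k. cf t k * (mp ?L k *v x) $ i)"
  have sm: "summable (\<lambda>k. cf t k * (mp ?L k *v x) $ i)" for i
    by (rule summable_norm_cancel, rule summable_cf, rule mpv_bound)
  have "(\<lambda>k. cf t k *s (mp ?L k *v x)) sums s"
    by (rule vec_sums) (simp add: s_def summable_sums[OF sm])
  then have "transition E t x = s"
    unfolding transition_def funpow_mp cf_def[symmetric] by (metis sums_unique)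
  then show ?thesis using sm by (simp add: s_def summable_sums)
qed

lemma trans_comp: "transition E s (transition E t x) = transition E (s + t) x"
proof (rule vec_eq_iff[THEN iffD2], rule allI)
  fix i
  let ?L = "laplacian E"
  define w where "w = transition E t x"
  define a where "a l j = cf s j * mp ?L j $ i $ l" for l j
  define b where "b l k = cf t k * (mp ?L k *v x) $ l" for l k
  have sa: "summable (\<lambda>j. norm (a l j))" for l
    unfolding a_def by (rule summable_cf[where C=1 and B="bnd ?L"]) (simp add: mp_bound)
  have sb: "summable (\<lambda>j. norm (b l j))" for l
    unfolding b_def by (rule summable_cf, rule mpv_bound)
  have bw: "b l sums w $ l" for l
    unfolding b_def w_def by (rule trans_sums)
  have cp: "(\<lambda>n. \<Sum>j\<le>n. a l j * b l (n - j)) sums (suminf (a l) * w $ l)" for l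
    using Cauchy_product_sums[OF sa sb] sums_unique[OF bw[of l]] by simp
  have s1: "(\<lambda>j. \<Sum>l\<in>UNIV. a l j * w $ l) sums (\<Sum>l\<in>UNIV. suminf (a l) * w $ l)"
    by (rule sums_sum, rule sums_mult2, rule summable_sums, rule summable_norm_cancel, rule sa)
  have e1: "(\<lambda>j. \<Sum>l\<in>UNIV. a l j * w $ l) = (\<lambda>j. cf s j * (mp ?L j *v w) $ i)"
    by (simp add: a_def matrix_vector_mult_def sum_distrib_left mult.assoc)
  have r1: "transition E s w $ i = (\<Sum>l\<in>UNIV. suminf (a l) * w $ l)"
    using sums_unique2[OF s1[unfolded e1] trans_sums[of s E w i]] by simp
  have s2: "(\<lambda>n. \<Sum>l\<in>UNIV. \<Sum>j\<le>n. a l j * b l (n - j)) sums (\<Sum>l\<in>UNIV. suminf (a l) * w $ l)"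
    by (rule sums_sum, rule cp)
  have e2: "(\<Sum>l\<in>UNIV. \<Sum>j\<le>n. a l j * b l (n - j)) = cf (s + t) n * (mp ?L n *v x) $ i" for n
  proof -
    have "(\<Sum>l\<in>UNIV. \<Sum>j\<le>n. a l j * b l (n - j))
        = (\<Sum>j\<le>n. cf s j * cf t (n - j) * (\<Sum>l\<in>UNIV. mp ?L j $ i $ l * (mp ?L (n - j) *v x) $ l))"
      unfolding a_def b_def
      unfolding a_def b_def sum_distrib_left
      by (subst sum.swap) (rule sum.cong[OF refl], rule sum.cong[OF refl], simp add: ac_simps)
    also have "\<dots> = (\<Sum>j\<le>n. cf s j * cf t (n - j) * (mp ?L j *v (mp ?L (n - j) *v x)) $ i)"
      by (simp add: matrix_vector_mult_def)
    also have "\<dots> = (\<Sum>j\<le>n. cf s j * cf t (n - j) * (mp ?L n *v x) $ i)"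
    proof (rule sum.cong[OF refl])
      fix j assume "j \<in> {..n}"
      then have "mp ?L n = mp ?L j ** mp ?L (n - j)" by (metis mp_add le_add_diff_inverse atMost_iff)
      then show "cf s j * cf t (n - j) * (mp ?L j *v (mp ?L (n - j) *v x)) $ i
          = cf s j * cf t (n - j) * (mp ?L n *v x) $ i"
        by (simp add: matrix_vector_mul_assoc)
    qed
    also have "\<dots> = cf (s + t) n * (mp ?L n *v x) $ i"
      by (simp add: cf_add sum_distrib_right)
    finally show ?thesis .
  qed
  show "transition E s (transition E t x) $ i = transition E (s + t) x $ i"
    using sums_unique2[OF s2[unfolded e2] trans_sums[of "s + t" E x i]] r1 unfolding w_def by simp
qed

lemma trans_zero: "transition E 0 x = x"
proof (rule vec_eq_iff[THEN iffD2], rule allI)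
  fix i
  have "(\<lambda>k. cf 0 k * (mp (laplacian E) k *v x) $ i) = (\<lambda>k. if k = 0 then x $ i else 0)"
    by (auto simp: cf_def)
  then show "transition E 0 x $ i = x $ i"
    using trans_sums[of 0 E x i] sums_single[of 0 "\<lambda>_. x $ i"] by (metis sums_unique)
qed

lemma trans_scale: "transition E t (c *s x) = c *s transition E t x"
proof (rule vec_eq_iff[THEN iffD2], rule allI)
  fix i
  have "(\<lambda>k. cf t k * (mp (laplacian E) k *v (c *s x)) $ i) = (\<lambda>k. c * (cf t k * (mp (laplacian E) k *v x) $ i))"
    by (simp add: matrix_vector_mult_def sum_distrib_left ac_simps)
  then show "transition E t (c *s x) $ i = (c *s transition E t x) $ i"
    using trans_sums[of t E "c *s x" i] sums_mult[OF trans_sums[of t E x i], of c]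
    by (simp add: sums_unique2)
qed

definition realv :: "complex^'v::finite \<Rightarrow> bool" where
  "realv x \<longleftrightarrow> (\<forall>i. cnj (x $ i) = x $ i)"

lemma lap_real: "cnj (laplacian E $ i $ j) = laplacian E $ i $ j"
  by (simp add: laplacian_def)

lemma mp_real: "cnj (mp (laplacian E) k $ i $ j) = mp (laplacian E) k $ i $ j"
  by (induction k arbitrary: i j) (simp_all add: mat_def matrix_matrix_mult_def lap_real)

lemma mpv_real: "realv x \<Longrightarrow> cnj ((mp (laplacian E) k *v x) $ i) = (mp (laplacian E) k *v x) $ i"
  by (simp add: realv_def matrix_vector_mult_def mp_real)

lemma trans_cnj: "realv x \<Longrightarrow> transition E (- t) x $ i = cnj (transition E t x $ i)"
proof -
  assume r: "realv x"
  have "(\<lambda>k. cnj (cf t k * (mp (laplacian E) k *v x) $ i)) sums cnj (transition E t x $ i)"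
    by (rule sums_cnj[THEN iffD2], rule trans_sums)
  moreover have "(\<lambda>k. cnj (cf t k * (mp (laplacian E) k *v x) $ i)) = (\<lambda>k. cf (-t) k * (mp (laplacian E) k *v x) $ i)"
    by (rule ext) (simp add: mpv_real[OF r] cnj_cf)
  ultimately show ?thesis using trans_sums[of "-t" E x i] by (simp add: sums_unique2)
qed

lemma aut_bij: "graph_automorphism E \<rho> \<Longrightarrow> bij \<rho>"
  by (simp add: graph_automorphism_def)

lemma aut_inj: "graph_automorphism E \<rho> \<Longrightarrow> \<rho> x = \<rho> y \<longleftrightarrow> x = y"
  by (meson aut_bij bij_def inj_eq)

lemma aut_E: "graph_automorphism E \<rho> \<Longrightarrow> E (\<rho> x) (\<rho> y) \<longleftrightarrow> E x y"
  by (simp add: graph_automorphism_def)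

lemma aut_inv: "graph_automorphism E \<rho> \<Longrightarrow> graph_automorphism E (inv \<rho>)"
proof -
  assume a: "graph_automorphism E \<rho>"
  have b: "bij \<rho>" using a by (rule aut_bij)
  have "E (inv \<rho> x) (inv \<rho> y) \<longleftrightarrow> E x y" for x y
    using aut_E[OF a, of "inv \<rho> x" "inv \<rho> y"] b by (simp add: bij_is_surj surj_f_inv_f)
  then show ?thesis using b by (simp add: graph_automorphism_def bij_imp_bij_inv)
qed

lemma aut_comp: "graph_automorphism E \<sigma> \<Longrightarrow> graph_automorphism E \<tau> \<Longrightarrow> graph_automorphism E (\<sigma> \<circ> \<tau>)"
  by (simp add: graph_automorphism_def bij_comp)

lemma deg_aut: "graph_automorphism E \<rho> \<Longrightarrow> degree E (\<rho> i) = degree E i"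
proof -
  assume a: "graph_automorphism E \<rho>"
  have b: "bij \<rho>" using a by (rule aut_bij)
  have "{y. E (\<rho> i) y} = \<rho> ` {y. E i y}"
  proof (rule set_eqI)
    fix y
    have "y = \<rho> (inv \<rho> y)" using b by (simp add: bij_is_surj surj_f_inv_f)
    then show "y \<in> {y. E (\<rho> i) y} \<longleftrightarrow> y \<in> \<rho> ` {y. E i y}"
      using aut_E[OF a] by (metis (mono_tags, lifting) image_iff mem_Collect_eq)
  qed
  moreover have "inj_on \<rho> {y. E i y}" using bij_is_inj[OF b] by (rule inj_on_subset) simp
  ultimately show ?thesis unfolding degree_def by (simp add: card_image)
qed

lemma lap_aut: "graph_automorphism E \<rho> \<Longrightarrow> laplacian E $ \<rho> i $ \<rho> j = laplacian E $ i $ j"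
  by (simp add: laplacian_def deg_aut aut_inj aut_E)

lemma sum_bij: "bij \<rho> \<Longrightarrow> (\<Sum>m\<in>UNIV. f (\<rho> m)) = (\<Sum>m\<in>UNIV. f m)"
  by (rule sum.reindex_bij_betw)

lemma mp_aut: "graph_automorphism E \<rho> \<Longrightarrow> mp (laplacian E) k $ \<rho> i $ \<rho> j = mp (laplacian E) k $ i $ j"
proof (induction k arbitrary: i j)
  case 0
  then show ?case by (simp add: mat_def aut_inj)
next
  case (Suc k)
  let ?L = "laplacian E"
  have "mp ?L (Suc k) $ \<rho> i $ \<rho> j = (\<Sum>m\<in>UNIV. ?L $ \<rho> i $ m * mp ?L k $ m $ \<rho> j)"
    by (simp add: matrix_matrix_mult_def)
  also have "\<dots> = (\<Sum>m\<in>UNIV. ?L $ \<rho> i $ \<rho> m * mp ?L k $ \<rho> m $ \<rho> j)"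
    by (rule sum_bij[symmetric], rule aut_bij, rule Suc.prems)
  also have "\<dots> = (\<Sum>m\<in>UNIV. ?L $ i $ m * mp ?L k $ m $ j)"
    by (simp add: lap_aut[OF Suc.prems] Suc.IH[OF Suc.prems])
  also have "\<dots> = mp ?L (Suc k) $ i $ j"
    by (simp add: matrix_matrix_mult_def)
  finally show ?case .
qed

lemma trans_aut:
  assumes a: "graph_automorphism E \<rho>"
  shows "transition E t (\<chi> i. x $ \<rho> i) = (\<chi> i. transition E t x $ \<rho> i)"
proof (rule vec_eq_iff[THEN iffD2], rule allI)
  fix i
  let ?L = "laplacian E"
  have "(mp ?L k *v (\<chi> i. x $ \<rho> i)) $ i = (mp ?L k *v x) $ \<rho> i" for k
  proof -
    have "(mp ?L k *v (\<chi> i. x $ \<rho> i)) $ i = (\<Sum>m\<in>UNIV. mp ?L k $ \<rho> i $ \<rho> m * x $ \<rho> m)"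
      by (simp add: matrix_vector_mult_def mp_aut[OF a])
    also have "\<dots> = (\<Sum>m\<in>UNIV. mp ?L k $ \<rho> i $ m * x $ m)"
      by (rule sum_bij, rule aut_bij, rule a)
    finally show ?thesis by (simp add: matrix_vector_mult_def)
  qed
  then have "(\<lambda>k. cf t k * (mp ?L k *v (\<chi> i. x $ \<rho> i)) $ i) = (\<lambda>k. cf t k * (mp ?L k *v x) $ \<rho> i)"
    by simp
  then show "transition E t (\<chi> i. x $ \<rho> i) $ i = (\<chi> i. transition E t x $ \<rho> i) $ i"
    using trans_sums[of t E "\<chi> i. x $ \<rho> i" i] trans_sums[of t E x "\<rho> i"]
    by (simp add: sums_unique2)
qed

definition push :: "('v::finite \<Rightarrow> 'v) \<Rightarrow> complex^'v \<Rightarrow> complex^'v" where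
  "push \<rho> v = (\<chi> i. v $ inv \<rho> i)"

lemma push_trans: "graph_automorphism E \<rho> \<Longrightarrow> transition E t (push \<rho> v) = push \<rho> (transition E t v)"
  unfolding push_def by (rule trans_aut, rule aut_inv)

lemma push_scale: "push \<rho> (c *s v) = c *s push \<rho> v"
  by (simp add: push_def vec_eq_iff)

definition X :: "'v::finite \<Rightarrow> 'v \<Rightarrow> complex^'v" where
  "X a b = std_basis a - std_basis b"

lemma inv_eq_iff': "bij \<rho> \<Longrightarrow> (inv \<rho> i = a) \<longleftrightarrow> (i = \<rho> a)"
  by (metis bij_inv_eq_iff)

lemma push_X: "bij \<rho> \<Longrightarrow> push \<rho> (X a b) = X (\<rho> a) (\<rho> b)"
  by (simp add: push_def X_def std_basis_def vec_eq_iff inv_eq_iff')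

lemma X_swap: "X b a = (-1) *s X a b"
  by (simp add: X_def vec_eq_iff)

lemma X_real: "realv (X a b)"
  by (simp add: realv_def X_def std_basis_def)

lemma X_eq:
  assumes "a \<noteq> b" "c \<noteq> d" "X a b = \<alpha> *s X c d"
  shows "{a, b} = {c, d}"
proof -
  have h: "X a b $ i = \<alpha> * X c d $ i" for i
    using assms(3) by simp
  have "a \<in> {c, d}"
    using h[of a] assms(1) by (auto simp: X_def std_basis_def split: if_splits)
  moreover have "b \<in> {c, d}"
    using h[of b] assms(1) by (auto simp: X_def std_basis_def split: if_splits)
  ultimately show ?thesis using assms(1,2) by auto
qed

lemma pair_sign: "{p, q} = {r, u} \<Longrightarrow> \<exists>s. X p q = s *s X r u"
  by (metis X_swap doubleton_eq_iff vector_smult_lid)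

lemma pst_sym:
  assumes "transition E t x = \<gamma> *s y" "realv x" "realv y" "cmod \<gamma> = 1"
  shows "transition E t y = \<gamma> *s x"
proof -
  have m: "transition E (- t) x = cnj \<gamma> *s y"
  proof (rule vec_eq_iff[THEN iffD2], rule allI)
    fix i
    show "transition E (- t) x $ i = (cnj \<gamma> *s y) $ i"
      using trans_cnj[OF assms(2), where t=t and E=E and i=i] assms(1,3) by (simp add: realv_def)
  qed
  have "x = transition E t (transition E (- t) x)"
    by (simp add: trans_comp trans_zero)
  also have "\<dots> = cnj \<gamma> *s transition E t y"
    by (simp add: m trans_scale)
  finally have "\<gamma> *s x = (\<gamma> * cnj \<gamma>) *s transition E t y"
    by (simp add: vector_smult_assoc)
  also have "\<gamma> * cnj \<gamma> = 1"
    using assms(4) complex_norm_square[of \<gamma>] by (simp add: mult.commute)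
  finally show ?thesis by simp
qed

lemma trans_push_X:
  assumes "graph_automorphism E \<sigma>" "transition E t (X p q) = \<gamma> *s X r u"
  shows "transition E t (X (\<sigma> p) (\<sigma> q)) = \<gamma> *s X (\<sigma> r) (\<sigma> u)"
proof -
  have b: "bij \<sigma>" using assms(1) by (rule aut_bij)
  have "transition E t (X (\<sigma> p) (\<sigma> q)) = transition E t (push \<sigma> (X p q))"
    by (simp add: push_X[OF b])
  also have "\<dots> = push \<sigma> (\<gamma> *s X r u)"
    by (simp add: push_trans[OF assms(1)] assms(2))
  also have "\<dots> = \<gamma> *s X (\<sigma> r) (\<sigma> u)"
    by (simp add: push_scale push_X[OF b])
  finally show ?thesis .
qed

lemma cancel_sm:
  fixes u v :: "complex^'v::finite"
  assumes "\<gamma> \<noteq> 0" "\<gamma> *s u = (s * \<gamma>) *s v"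
  shows "u = s *s v"
proof -
  have "inverse \<gamma> *s (\<gamma> *s u) = inverse \<gamma> *s ((s * \<gamma>) *s v)" using assms(2) by simp
  then show ?thesis using assms(1) by (simp add: vector_smult_assoc field_simps)
qed

lemma inv_even:
  "finite S \<Longrightarrow> \<forall>x\<in>S. h x \<in> S \<and> h x \<noteq> x \<and> h (h x) = x \<Longrightarrow> even (card S)"
proof (induction "card S" arbitrary: S rule: less_induct)
  case less
  show ?case
  proof (cases "S = {}")
    case True then show ?thesis by simp
  next
    case False
    then obtain x where x: "x \<in> S" by blast
    let ?S = "S - {x, h x}"
    have sub: "{x, h x} \<subseteq> S" using x less.prems(2) by auto
    have c2: "card {x, h x} = 2" using x less.prems(2) by auto
    have cS: "card ?S = card S - 2"
      using card_Diff_subset[OF _ sub] c2 by simp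
    have ge: "card S \<ge> 2"
      using card_mono[OF less.prems(1) sub] c2 by simp
    have "even (card ?S)"
    proof (rule less.hyps)
      show "card ?S < card S" using cS ge by simp
      show "finite ?S" using less.prems(1) by simp
      show "\<forall>y\<in>?S. h y \<in> ?S \<and> h y \<noteq> y \<and> h (h y) = y"
        using less.prems(2) x by (metis DiffD1 DiffD2 DiffI insertCI insertE singletonD)
    qed
    then show ?thesis using cS ge by (metis add_diff_inverse_nat even_add even_numeral not_less)
  qed
qed

theorem mainTheorem15:
  fixes E :: "'v::finite \<Rightarrow> 'v \<Rightarrow> bool"
  assumes "simple_graph E"
    and "edge_transitive E"
    and "odd (card (edges E))"
  shows "\<not> (\<exists>a b c d. E a b \<and> E c d \<and> {a, b} \<noteq> {c, d} \<and>
            pst E (std_basis a - std_basis b) (std_basis c - std_basis d))"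
proof
  assume "\<exists>a b c d. E a b \<and> E c d \<and> {a, b} \<noteq> {c, d} \<and>
            pst E (std_basis a - std_basis b) (std_basis c - std_basis d)"
  then obtain a b c d where Eab: "E a b" and Ecd: "E c d" and ne: "{a, b} \<noteq> {c, d}"
    and p: "pst E (std_basis a - std_basis b) (std_basis c - std_basis d)" by blast
  from p obtain t \<gamma> where g1: "cmod \<gamma> = 1" and U0: "transition E t (X a b) = \<gamma> *s X c d"
    unfolding pst_def X_def by blast
  have ab: "a \<noteq> b" using assms(1) Eab unfolding simple_graph_def by blast
  have cd: "c \<noteq> d" using assms(1) Ecd unfolding simple_graph_def by blast
  have g0: "\<gamma> \<noteq> 0" using g1 by auto
  have U1: "transition E t (X c d) = \<gamma> *s X a b"
    by (rule pst_sym[OF U0 X_real X_real g1])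
  have eab: "{a, b} \<in> edges E" using Eab unfolding edges_def by blast
  have ecd: "{c, d} \<in> edges E" using Ecd unfolding edges_def by blast
  have stab: "\<sigma> ` {c, d} = \<tau> ` {c, d}"
    if st: "graph_automorphism E \<sigma>" "graph_automorphism E \<tau>" "\<sigma> ` {a, b} = \<tau> ` {a, b}" for \<sigma> \<tau>
  proof -
    have "{\<sigma> a, \<sigma> b} = {\<tau> a, \<tau> b}" using st(3) by simp
    then obtain s where s: "X (\<sigma> a) (\<sigma> b) = s *s X (\<tau> a) (\<tau> b)" using pair_sign by blast
    have "\<gamma> *s X (\<sigma> c) (\<sigma> d) = transition E t (X (\<sigma> a) (\<sigma> b))"
      using trans_push_X[OF st(1) U0] by simp
    also have "\<dots> = s *s transition E t (X (\<tau> a) (\<tau> b))" by (simp add: s trans_scale)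
    also have "\<dots> = (s * \<gamma>) *s X (\<tau> c) (\<tau> d)"
      using trans_push_X[OF st(2) U0] by (simp add: vector_smult_assoc)
    finally have "X (\<sigma> c) (\<sigma> d) = s *s X (\<tau> c) (\<tau> d)" by (rule cancel_sm[OF g0])
    then have "{\<sigma> c, \<sigma> d} = {\<tau> c, \<tau> d}"
      by (rule X_eq[rotated 2]) (simp_all add: aut_inj[OF st(1)] aut_inj[OF st(2)] cd)
    then show ?thesis by simp
  qed
  obtain \<tau> where tau: "graph_automorphism E \<tau>" "\<tau> ` {a, b} = {c, d}" "\<tau> ` {c, d} = {a, b}"
  proof -
    obtain \<tau> where tau: "graph_automorphism E \<tau>" "\<tau> ` {a, b} = {c, d}"
      using assms(2) eab ecd unfolding edge_transitive_def by blast
    have "{\<tau> a, \<tau> b} = {c, d}" using tau by simp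
    then obtain s where s: "X (\<tau> a) (\<tau> b) = s *s X c d" using pair_sign by blast
    have "\<gamma> *s X (\<tau> c) (\<tau> d) = transition E t (X (\<tau> a) (\<tau> b))"
      using trans_push_X[OF tau(1) U0] by simp
    also have "\<dots> = (s * \<gamma>) *s X a b" by (simp add: s trans_scale U1 vector_smult_assoc)
    finally have "X (\<tau> c) (\<tau> d) = s *s X a b" by (rule cancel_sm[OF g0])
    then have "{\<tau> c, \<tau> d} = {a, b}"
      by (rule X_eq[rotated 2]) (simp_all add: aut_inj[OF tau(1)] cd ab)
    then show ?thesis using that tau by simp
  qed
  define sel where "sel f = (SOME \<sigma>. graph_automorphism E \<sigma> \<and> \<sigma> ` {a, b} = f)" for f
  have sel: "graph_automorphism E (sel f) \<and> sel f ` {a, b} = f" if "f \<in> edges E" for f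
  proof -
    have "\<exists>\<sigma>. graph_automorphism E \<sigma> \<and> \<sigma> ` {a, b} = f"
      using assms(2) eab that unfolding edge_transitive_def by blast
    then show ?thesis unfolding sel_def by (rule someI_ex)
  qed
  define h where "h f = sel f ` {c, d}" for f
  have inv: "\<forall>f\<in>edges E. h f \<in> edges E \<and> h f \<noteq> f \<and> h (h f) = f"
  proof
    fix f assume f: "f \<in> edges E"
    have s1: "graph_automorphism E (sel f)" and s2: "sel f ` {a, b} = f" using sel[OF f] by auto
    have "E (sel f c) (sel f d)" using aut_E[OF s1, of c d] Ecd by simp
    then have hin: "h f \<in> edges E"
      unfolding h_def edges_def by auto
    have "h f \<noteq> f"
    proof
      assume "h f = f"
      then have "sel f ` {c, d} = sel f ` {a, b}" using s2 by (simp add: h_def)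
      then have "{c, d} = {a, b}"
        by (simp only: inj_image_eq_iff[OF bij_is_inj[OF aut_bij[OF s1]]])
      then show False using ne by simp
    qed
    moreover have "h (h f) = f"
    proof -
      have t1: "graph_automorphism E (sel (h f))" and t2: "sel (h f) ` {a, b} = h f"
        using sel[OF hin] by auto
      have "(sel f \<circ> \<tau>) ` {a, b} = h f" by (simp only: image_comp[symmetric] tau(2) h_def)
      then have "sel (h f) ` {c, d} = (sel f \<circ> \<tau>) ` {c, d}"
        using stab[OF t1 aut_comp[OF s1 tau(1)]] t2 by simp
      also have "\<dots> = f" by (simp only: image_comp[symmetric] tau(3) s2)
      finally show ?thesis by (simp add: h_def)
    qed
    ultimately show "h f \<in> edges E \<and> h f \<noteq> f \<and> h (h f) = f" using hin by blast
  qed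
  have "even (card (edges E))" by (rule inv_even[OF _ inv]) simp
  with assms(3) show False by simp
qed

end
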